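(* Let $G=(V,E)$ be a finite graph and $\varepsilon$ an orientation of $G$. The number of orientations of $G$ that are Eulerian equivalent to $\varepsilon$ equals the number of flows of $(G,\varepsilon)$ with values in $\{0,1\}$: \[\#[\varepsilon]=\bar\varphi_\varepsilon(G,1)=|\bar\Delta^+_{\mathrm{FL}}(G,\varepsilon)\cap\mathbb Z^E|.\]
   Context: An orientation assigns each edge (including loops) one of its two directions; $\varepsilon(v,e)=1$ ($-1$) if non-loop $e$ points out of (into) end-vertex $v$, $0$ otherwise. A flow of $(G,\varepsilon)$ with values in a set of reals is $f:E\to\mathbb R$ with $\sum_e m_{v,e}f(e)=0$ for all $v$, $m_{v,e}=\varepsilon(v,e)$ for non-loops and $0$ for loops. $\bar\Delta^+_{\mathrm{FL}}(G,\varepsilon)=\{f \text{ real flow}:0\le f(e)\le1\ \forall e\}$; $\bar\varphi_\varepsilon(G,q)$ is the number of integer flows with $0\le f(e)\le q$ for all $e$. $[\varepsilon]$ is the set of orientations Eulerian equivalent to $\varepsilon$, where two orientations are Eulerian equivalent if the spanning subgraph formed by the edges on which they differ is directed Eulerian (in-degree equals out-degree at each vertex, loops contributing one of each) with respect to either of them. *)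

theory Defs
  imports Complex_Main
begin

text \<open>A finite graph (loops and multiple edges allowed) is given by a vertex set V,
an edge set E and a map ends assigning to each edge its two (reference-ordered)
end vertices. An orientation is a Boolean function on E: ori e = True means that e
is directed from fst (ends e) to snd (ends e), False means the opposite direction.
Loops therefore also have two directions.\<close>

definition orientations :: "'e set \<Rightarrow> ('e \<Rightarrow> bool) set" where
  "orientations E = {ori. \<forall>e. e \<notin> E \<longrightarrow> ori e = False}"

definition tail :: "('e \<Rightarrow> 'v \<times> 'v) \<Rightarrow> ('e \<Rightarrow> bool) \<Rightarrow> 'e \<Rightarrow> 'v" where
  "tail ends ori e = (if ori e then fst (ends e) else snd (ends e))"

definition head :: "('e \<Rightarrow> 'v \<times> 'v) \<Rightarrow> ('e \<Rightarrow> bool) \<Rightarrow> 'e \<Rightarrow> 'v" where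
  "head ends ori e = (if ori e then snd (ends e) else fst (ends e))"

definition is_loop :: "('e \<Rightarrow> 'v \<times> 'v) \<Rightarrow> 'e \<Rightarrow> bool" where
  "is_loop ends e = (fst (ends e) = snd (ends e))"

definition inc_coeff :: "('e \<Rightarrow> 'v \<times> 'v) \<Rightarrow> ('e \<Rightarrow> bool) \<Rightarrow> 'v \<Rightarrow> 'e \<Rightarrow> int" where
  "inc_coeff ends ori v e =
     (if is_loop ends e then 0
      else if v = tail ends ori e then 1
      else if v = head ends ori e then -1 else 0)"

text \<open>Directed Eulerian spanning subgraph with edge set D w.r.t. orientation ori
(a loop contributes one to in-degree and one to out-degree of its vertex).\<close>
definition directed_eulerian ::
  "'v set \<Rightarrow> ('e \<Rightarrow> 'v \<times> 'v) \<Rightarrow> ('e \<Rightarrow> bool) \<Rightarrow> 'e set \<Rightarrow> bool" where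
  "directed_eulerian V ends ori D =
     (\<forall>v\<in>V. card {e\<in>D. tail ends ori e = v} = card {e\<in>D. head ends ori e = v})"

definition eulerian_equiv ::
  "'v set \<Rightarrow> 'e set \<Rightarrow> ('e \<Rightarrow> 'v \<times> 'v) \<Rightarrow> ('e \<Rightarrow> bool) \<Rightarrow> ('e \<Rightarrow> bool) \<Rightarrow> bool" where
  "eulerian_equiv V E ends o1 o2 =
     directed_eulerian V ends o1 {e\<in>E. o1 e \<noteq> o2 e}"

definition eul_class ::
  "'v set \<Rightarrow> 'e set \<Rightarrow> ('e \<Rightarrow> 'v \<times> 'v) \<Rightarrow> ('e \<Rightarrow> bool) \<Rightarrow> ('e \<Rightarrow> bool) set" where
  "eul_class V E ends eps = {ori \<in> orientations E. eulerian_equiv V E ends eps ori}"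

definition is_flow ::
  "'v set \<Rightarrow> 'e set \<Rightarrow> ('e \<Rightarrow> 'v \<times> 'v) \<Rightarrow> ('e \<Rightarrow> bool) \<Rightarrow> ('e \<Rightarrow> 'a::comm_ring_1) \<Rightarrow> bool" where
  "is_flow V E ends eps f =
     ((\<forall>e. e \<notin> E \<longrightarrow> f e = 0) \<and>
      (\<forall>v\<in>V. (\<Sum>e\<in>E. of_int (inc_coeff ends eps v e) * f e) = 0))"

definition flow_polytope ::
  "'v set \<Rightarrow> 'e set \<Rightarrow> ('e \<Rightarrow> 'v \<times> 'v) \<Rightarrow> ('e \<Rightarrow> bool) \<Rightarrow> ('e \<Rightarrow> real) set" where
  "flow_polytope V E ends eps =
     {f. is_flow V E ends eps f \<and> (\<forall>e\<in>E. 0 \<le> f e \<and> f e \<le> 1)}"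

definition phi_bar ::
  "'v set \<Rightarrow> 'e set \<Rightarrow> ('e \<Rightarrow> 'v \<times> 'v) \<Rightarrow> ('e \<Rightarrow> bool) \<Rightarrow> nat \<Rightarrow> nat" where
  "phi_bar V E ends eps q =
     card {f :: 'e \<Rightarrow> int. is_flow V E ends eps f \<and> (\<forall>e\<in>E. 0 \<le> f e \<and> f e \<le> int q)}"

end

theory Submission
  imports Defs
begin

lemma inc_coeff_alt:
  "inc_coeff ends ori v e = of_bool (tail ends ori e = v) - of_bool (head ends ori e = v)"
  unfolding inc_coeff_def is_loop_def tail_def head_def
  by (cases "ends e") auto

lemma sum_ind:
  assumes "finite E" "D \<subseteq> E"
  shows "(\<Sum>e\<in>E. of_int (inc_coeff ends ori v e) * (if e \<in> D then 1 else 0) :: 'a::comm_ring_1)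
     = of_nat (card {e\<in>D. tail ends ori e = v}) - of_nat (card {e\<in>D. head ends ori e = v})"
proof -
  have fD: "finite D" using assms finite_subset by blast
  have "(\<Sum>e\<in>E. of_int (inc_coeff ends ori v e) * (if e \<in> D then 1 else 0) :: 'a)
      = (\<Sum>e\<in>D. of_int (inc_coeff ends ori v e))"
  proof -
    have "(\<Sum>e\<in>E. of_int (inc_coeff ends ori v e) * (if e \<in> D then 1 else 0) :: 'a)
      = (\<Sum>e\<in>E. if e \<in> D then of_int (inc_coeff ends ori v e) else 0)"
      by (rule sum.cong) auto
    also have "\<dots> = (\<Sum>e\<in>E \<inter> D. of_int (inc_coeff ends ori v e))"
      using assms(1) by (simp add: sum.inter_restrict)
    finally show ?thesis using assms(2) by (simp add: Int_absorb1)
  qed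
  also have "\<dots> = (\<Sum>e\<in>D. (if tail ends ori e = v then 1 else 0) - (if head ends ori e = v then 1 else 0))"
    by (rule sum.cong) (auto simp: inc_coeff_alt)
  also have "\<dots> = of_nat (card {e\<in>D. tail ends ori e = v}) - of_nat (card {e\<in>D. head ends ori e = v})"
    using fD by (simp add: sum_subtractf sum.If_cases Int_def conj_commute)
  finally show ?thesis .
qed

theorem proposition5p5:
  fixes V :: "'v set" and E :: "'e set" and ends :: "'e \<Rightarrow> 'v \<times> 'v"
    and eps :: "'e \<Rightarrow> bool"
  assumes "finite V" and "finite E"
    and "\<forall>e\<in>E. fst (ends e) \<in> V \<and> snd (ends e) \<in> V"
    and "eps \<in> orientations E"
  shows "card (eul_class V E ends eps) = phi_bar V E ends eps 1
       \<and> phi_bar V E ends eps 1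
           = card (flow_polytope V E ends eps \<inter> {f. \<forall>e\<in>E. f e \<in> \<int>})"
proof
  define F where "F = {f :: 'e \<Rightarrow> int. is_flow V E ends eps f \<and> (\<forall>e\<in>E. 0 \<le> f e \<and> f e \<le> int 1)}"
  define g where "g = (\<lambda>ori e. if e \<in> {e\<in>E. eps e \<noteq> ori e} then (1::int) else 0)"
  have flowD: "is_flow V E ends eps (\<lambda>e. if e \<in> D then (1::int) else 0) \<longleftrightarrow>
       directed_eulerian V ends eps D" if "D \<subseteq> E" for D
  proof -
    have h: "\<And>v. (\<Sum>e\<in>E. of_int (inc_coeff ends eps v e) * (if e \<in> D then 1 else 0) :: int)
       = int (card {e\<in>D. tail ends eps e = v}) - int (card {e\<in>D. head ends eps e = v})"
      using sum_ind[OF assms(2) that, where 'a=int] by (simp only: of_int_eq_id id_apply)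
    have z: "(\<forall>e. e \<notin> E \<longrightarrow> (if e \<in> D then (1::int) else 0) = 0)" using that by auto
    show ?thesis unfolding is_flow_def directed_eulerian_def h using z by simp
  qed
  have inj: "inj_on g (eul_class V E ends eps)"
  proof (rule inj_onI)
    fix o1 o2 assume o1: "o1 \<in> eul_class V E ends eps" and o2: "o2 \<in> eul_class V E ends eps"
      and eq: "g o1 = g o2"
    show "o1 = o2"
    proof
      fix e
      have "g o1 e = g o2 e" using eq by simp
      then show "o1 e = o2 e" using o1 o2
        by (cases "e \<in> E") (auto simp: g_def eul_class_def orientations_def split: if_splits)
    qed
  qed
  have img: "g ` eul_class V E ends eps = F"
  proof
    show "g ` eul_class V E ends eps \<subseteq> F"
    proof
      fix f assume "f \<in> g ` eul_class V E ends eps"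
      then obtain ori where ori: "ori \<in> eul_class V E ends eps" and f: "f = g ori" by blast
      have "directed_eulerian V ends eps {e\<in>E. eps e \<noteq> ori e}"
        using ori by (simp add: eul_class_def eulerian_equiv_def)
      then have "is_flow V E ends eps f" using flowD[of "{e\<in>E. eps e \<noteq> ori e}"]
        by (simp add: f g_def)
      then show "f \<in> F" by (simp add: F_def f g_def)
    qed
  next
    show "F \<subseteq> g ` eul_class V E ends eps"
    proof
      fix f assume fF: "f \<in> F"
      define ori where "ori = (\<lambda>e. e \<in> E \<and> (eps e \<noteq> (f e = 1)))"
      have z: "\<forall>e. e \<notin> E \<longrightarrow> f e = 0" using fF by (simp add: F_def is_flow_def)
      have D: "{e\<in>E. eps e \<noteq> ori e} = {e\<in>E. f e = 1}" by (auto simp: ori_def)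
      have fg: "f = (\<lambda>e. if e \<in> {e\<in>E. f e = 1} then 1 else 0)"
      proof
        fix e show "f e = (if e \<in> {e\<in>E. f e = 1} then 1 else 0)"
          using fF z by (cases "e \<in> E") (auto simp: F_def)
      qed
      have "g ori = f" unfolding g_def D by (rule fg[symmetric])
      moreover have "ori \<in> eul_class V E ends eps"
      proof -
        have "is_flow V E ends eps (\<lambda>e. if e \<in> {e\<in>E. f e = 1} then (1::int) else 0)"
        proof -
          have "is_flow V E ends eps f" using fF by (simp add: F_def)
          then show ?thesis by (rule subst[OF fg, where P="is_flow V E ends eps"])
        qed
        then have "directed_eulerian V ends eps {e\<in>E. f e = 1}"
          using flowD[of "{e\<in>E. f e = 1}"] by simp
        then have "eulerian_equiv V E ends eps ori"
          unfolding eulerian_equiv_def by (simp only: D)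
        moreover have "ori \<in> orientations E" by (simp add: orientations_def ori_def)
        ultimately show ?thesis by (simp add: eul_class_def)
      qed
      ultimately show "f \<in> g ` eul_class V E ends eps" by blast
    qed
  qed
  show "card (eul_class V E ends eps) = phi_bar V E ends eps 1"
    using card_image[OF inj] img by (simp add: phi_bar_def F_def)
  have inj2: "inj_on (\<lambda>f e. real_of_int (f e)) F"
    by (rule inj_onI) (auto simp: fun_eq_iff)
  have img2: "(\<lambda>f e. real_of_int (f e)) ` F = flow_polytope V E ends eps \<inter> {f. \<forall>e\<in>E. f e \<in> \<int>}"
  proof
    show "(\<lambda>f e. real_of_int (f e)) ` F \<subseteq> flow_polytope V E ends eps \<inter> {f. \<forall>e\<in>E. f e \<in> \<int>}"
    proof
      fix r assume "r \<in> (\<lambda>f e. real_of_int (f e)) ` F"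
      then obtain f where fF: "f \<in> F" and r: "r = (\<lambda>e. real_of_int (f e))" by blast
      have "\<forall>v\<in>V. (\<Sum>e\<in>E. of_int (inc_coeff ends eps v e) * f e) = 0"
        using fF by (simp add: F_def is_flow_def)
      moreover have "\<And>v. (\<Sum>e\<in>E. of_int (inc_coeff ends eps v e) * r e) = real_of_int (\<Sum>e\<in>E. of_int (inc_coeff ends eps v e) * f e)"
        unfolding r by simp
      ultimately have "\<forall>v\<in>V. (\<Sum>e\<in>E. of_int (inc_coeff ends eps v e) * r e) = 0"
        by (simp del: of_int_sum of_int_mult)
      then show "r \<in> flow_polytope V E ends eps \<inter> {f. \<forall>e\<in>E. f e \<in> \<int>}"
        using fF unfolding r by (auto simp: F_def is_flow_def flow_polytope_def)
    qed
  next
    show "flow_polytope V E ends eps \<inter> {f. \<forall>e\<in>E. f e \<in> \<int>} \<subseteq> (\<lambda>f e. real_of_int (f e)) ` F"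
    proof
      fix r assume rP: "r \<in> flow_polytope V E ends eps \<inter> {f. \<forall>e\<in>E. f e \<in> \<int>}"
      define f where "f = (\<lambda>e. \<lfloor>r e\<rfloor>)"
      have z: "\<forall>e. e \<notin> E \<longrightarrow> r e = 0" using rP by (simp add: flow_polytope_def is_flow_def)
      have rf: "r = (\<lambda>e. real_of_int (f e))"
      proof
        fix e show "r e = real_of_int (f e)"
          using rP z by (cases "e \<in> E") (auto simp: f_def elim!: Ints_cases)
      qed
      have s: "\<forall>v\<in>V. (\<Sum>e\<in>E. of_int (inc_coeff ends eps v e) * r e) = 0"
        using rP by (simp add: flow_polytope_def is_flow_def)
      have "\<forall>v\<in>V. (\<Sum>e\<in>E. of_int (inc_coeff ends eps v e) * f e) = 0"
      proof
        fix v assume "v \<in> V"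
        have "(\<Sum>e\<in>E. of_int (inc_coeff ends eps v e) * r e) = real_of_int (\<Sum>e\<in>E. of_int (inc_coeff ends eps v e) * f e)"
          by (simp add: rf)
        then have "real_of_int (\<Sum>e\<in>E. of_int (inc_coeff ends eps v e) * f e) = 0"
          using s \<open>v \<in> V\<close> by simp
        then show "(\<Sum>e\<in>E. of_int (inc_coeff ends eps v e) * f e) = 0" by linarith
      qed
      moreover have "\<forall>e. e \<notin> E \<longrightarrow> f e = 0" using z by (simp add: f_def)
      moreover have "\<forall>e\<in>E. 0 \<le> f e \<and> f e \<le> 1"
        using rP by (auto simp: f_def flow_polytope_def)
      ultimately have "f \<in> F" by (simp add: F_def is_flow_def)
      then show "r \<in> (\<lambda>f e. real_of_int (f e)) ` F" using rf by blast
    qed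
  qed
  show "phi_bar V E ends eps 1 = card (flow_polytope V E ends eps \<inter> {f. \<forall>e\<in>E. f e \<in> \<int>})"
    using card_image[OF inj2] img2 by (simp add: phi_bar_def F_def)
qed

end
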